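(* Let $\mathcal A=\{r_0,\dots,r_m\}\subset\mathbb Z^n$ with $\mathbb Z\mathcal A=\mathbb Z^n$, affine span of dimension $n$, and let $X_{\mathcal A}\subset\mathbb P^m$ be the associated projective toric variety, with $\mathbf 1=(1:\dots:1)\in X_{\mathcal A}$. For $k\ge1$, the projectivization of the row span of the matrix $A^{(k)}$ equals the $k$-th osculating space $\mathbb T^k_{X_{\mathcal A},\mathbf 1}$ of $X_{\mathcal A}$ at $\mathbf 1$. This space depends only on the toric variety $X_{\mathcal A}\subset\mathbb P^m$ and not on the choice of the configuration (and associated matrix) used to rationally parametrize it. Moreover, $X_{\mathcal A}\hookrightarrow\mathbb P^m$ is generically $k$-jet spanned if and only if $A^{(k)}$ has maximal rank $\binom{n+k}{k}$.
   Context: $X_{\mathcal A}$ is the Zariski closure of the image of $(\mathbb C^* )^n\to\mathbb P^m$, $x\mapsto(x^{r_0}:\dots:x^{r_m})$ (not necessarily normal). $A^{(k)}$ is the $\binom{n+k}{k}\times(m+1)$ integer matrix whose rows, indexed by $\beta\in\mathbb N^n$ with $|\beta|\le k$ (in some fixed order), are the vectors $(r_0^\beta,\dots,r_m^\beta)$, where $r_i^\beta=\prod_j (r_i^j)^{\beta_j}$; equivalently the rows are the coordinatewise products of at most $k$ rows of the matrix $A$ with columns $(1,r_i)$, with the all-ones row $\mathbf v_0$ (e.g. for $k=2$: $\mathbf v_0,\dots,\mathbf v_n$ and $\mathbf v_i*\mathbf v_j$, $1\le i\le j\le n$). For an embedded variety with $\mathcal L=\mathcal O_X(1)$, the $k$-th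 osculating space at a smooth point $x$ is $\mathbb T^k_{X,x}=\mathbb P(\operatorname{Im}j_{k,x})$, where $j_{k,x}\colon H^0(\mathbb P^m,\mathcal O(1))\to\mathcal L/\mathfrak m_x^{k+1}\mathcal L$ is the Taylor expansion to order $k$; the embedding is generically $k$-jet spanned if $j_{k,x}$ is surjective (rank $\binom{n+k}{n}$) at a general point. *)

theory Defs
  imports "HOL-Analysis.Analysis"
begin

text \<open>Coordinates of the ambient space C^(m+1) are indexed by a finite type 'm
  (one index per point r_i of the configuration); the torus variables are
  indexed by a finite type 'n, so n = CARD('n).  We work on the affine cone
  in C^(m+1) over the projective variety in P^m.\<close>

inductive poly_fun :: "(complex^'m \<Rightarrow> complex) \<Rightarrow> bool" where
  pf_const: "poly_fun (\<lambda>z. c)"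
| pf_coord: "poly_fun (\<lambda>z. z $ i)"
| pf_add: "poly_fun f \<Longrightarrow> poly_fun g \<Longrightarrow> poly_fun (\<lambda>z. f z + g z)"
| pf_mult: "poly_fun f \<Longrightarrow> poly_fun g \<Longrightarrow> poly_fun (\<lambda>z. f z * g z)"

definition zariski_closure :: "(complex^'m) set \<Rightarrow> (complex^'m) set" where
  "zariski_closure S =
     {z. \<forall>f. poly_fun f \<longrightarrow> (\<forall>s\<in>S. f s = 0) \<longrightarrow> f z = 0}"

text \<open>Affine cone over the projective toric variety X_A: Zariski closure of
  the cone over the image of the monomial map x \<mapsto> (x^r_0 : ... : x^r_m).\<close>
definition toric_cone :: "('m \<Rightarrow> int^'n) \<Rightarrow> (complex^'m) set" where
  "toric_cone r = zariski_closure
     {(\<chi> i. t * (\<Prod>j\<in>UNIV. (x $ j) powi (r i $ j))) | t x.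
        t \<noteq> 0 \<and> (\<forall>j. x $ j \<noteq> 0)}"

definition lin_form :: "complex^'m \<Rightarrow> complex^'m \<Rightarrow> complex" where
  "lin_form c z = (\<Sum>i\<in>UNIV. c $ i * z $ i)"

text \<open>Kernel of the k-jet map j_(k,p): linear forms whose restriction to the
  (cone over the) variety X lies in m_p^(k+1), i.e. vanishes to order k+1 at p.\<close>
definition jet_kernel :: "(complex^'m) set \<Rightarrow> nat \<Rightarrow> complex^'m \<Rightarrow> (complex^'m) set" where
  "jet_kernel X k p = {c. \<exists>C \<delta>. \<delta> > 0 \<and>
      (\<forall>z\<in>X. norm (z - p) < \<delta> \<longrightarrow> cmod (lin_form c z) \<le> C * norm (z - p) ^ (k + 1))}"

text \<open>Rank of j_(k,p) = dim H^0(O(1)) - dim ker j_(k,p).\<close>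
definition jet_rank :: "(complex^'m) set \<Rightarrow> nat \<Rightarrow> complex^'m \<Rightarrow> nat" where
  "jet_rank X k p = CARD('m) - vec.dim (jet_kernel X k p)"

text \<open>k-th osculating space P(Im j_(k,p)), as the linear subspace of C^(m+1)
  (affine cone over the projective subspace of P^m) annihilated by ker j_(k,p).\<close>
definition osculating_space :: "(complex^'m) set \<Rightarrow> nat \<Rightarrow> complex^'m \<Rightarrow> (complex^'m) set" where
  "osculating_space X k p = {v. \<forall>c\<in>jet_kernel X k p. lin_form c v = 0}"

text \<open>Generically k-jet spanned (X of dimension n): j_(k,p) has rank
  binom(n+k, n) for all p in a nonempty Zariski open subset of X.\<close>
definition generically_jet_spanned :: "(complex^'m) set \<Rightarrow> nat \<Rightarrow> nat \<Rightarrow> bool" where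
  "generically_jet_spanned X n k \<longleftrightarrow>
     (\<exists>f. poly_fun f \<and> (\<exists>p\<in>X. f p \<noteq> 0) \<and>
        (\<forall>p\<in>X. p \<noteq> 0 \<and> f p \<noteq> 0 \<longrightarrow> jet_rank X k p = (n + k) choose n))"

definition Ak_rows :: "('m \<Rightarrow> int^'n) \<Rightarrow> nat \<Rightarrow> (complex^'m) set" where
  "Ak_rows r k = {(\<chi> i. of_int (\<Prod>j\<in>UNIV. (r i $ j) ^ (\<beta> $ j))) | \<beta>::nat^'n.
                     (\<Sum>j\<in>UNIV. \<beta> $ j) \<le> k}"

definition good_config :: "('m \<Rightarrow> int^'n) \<Rightarrow> bool" where
  "good_config r \<longleftrightarrow> inj r
     \<and> (\<forall>v::int^'n. \<exists>a::'m \<Rightarrow> int. v = (\<Sum>i\<in>UNIV. a i *s r i))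
     \<and> aff_dim (range (\<lambda>i. (\<chi> j. real_of_int (r i $ j)) :: real^'n)) = int CARD('n)"

end

theory Submission
  imports Defs
begin


definition perp :: "(complex^'m) set \<Rightarrow> (complex^'m::finite) set" where
  "perp S = {c. \<forall>v\<in>S. lin_form c v = 0}"

lemma lin_form_add2: "lin_form c (u + v) = lin_form c u + lin_form c v"
  by (simp add: lin_form_def algebra_simps sum.distrib)
lemma lin_form_scale2: "lin_form c (a *s v) = a * lin_form c v"
  by (simp add: lin_form_def algebra_simps sum_distrib_left)
lemma lin_form_add1: "lin_form (u + v) c = lin_form u c + lin_form v c"
  by (simp add: lin_form_def algebra_simps sum.distrib)
lemma lin_form_scale1: "lin_form (a *s v) c = a * lin_form v c"
  by (simp add: lin_form_def algebra_simps sum_distrib_left)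
lemma lin_form_zero2[simp]: "lin_form c 0 = 0" by (simp add: lin_form_def)
lemma lin_form_zero1[simp]: "lin_form 0 c = 0" by (simp add: lin_form_def)
lemma lin_form_diff1: "lin_form (u - v) c = lin_form u c - lin_form v c"
  by (simp add: lin_form_def algebra_simps sum_subtractf)
lemma lin_form_diff2: "lin_form c (u - v) = lin_form c u - lin_form c v"
  by (simp add: lin_form_def algebra_simps sum_subtractf)

lemma perp_span: "c \<in> perp W \<Longrightarrow> v \<in> vec.span W \<Longrightarrow> lin_form c v = 0"
proof -
  assume c: "c \<in> perp W" and v: "v \<in> vec.span W"
  have "vec.subspace {v. lin_form c v = 0}"
    by (auto simp: vec.subspace_def lin_form_add2 lin_form_scale2)
  moreover have "W \<subseteq> {v. lin_form c v = 0}" using c by (auto simp: perp_def)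
  ultimately show ?thesis using v vec.span_minimal by blast
qed

lemma perp_span_eq: "perp (vec.span W) = perp W"
  using perp_span by (auto simp: perp_def vec.span_base)

lemma vec_subspace_perp: "vec.subspace (perp W)"
  by (auto simp: vec.subspace_def perp_def lin_form_add1 lin_form_scale1)

lemma scaleR_vec_complex: "(r *\<^sub>R (v::complex^'m::finite)) = (of_real r :: complex) *s v"
  by (simp add: vec_eq_iff of_real_def del: scaleR_conv_of_real)

lemma real_subspace_vec_span: "subspace (vec.span (W::(complex^'m::finite) set))"
  unfolding subspace_def
  by (auto simp: scaleR_vec_complex vec.span_zero vec.span_add vec.span_scale)

lemma separate:
  fixes W :: "(complex^'m::finite) set"
  assumes "v \<notin> vec.span W"
  shows "\<exists>c\<in>perp W. lin_form c v \<noteq> 0"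
proof -
  let ?U = "vec.span W"
  have spU: "span ?U = ?U" using real_subspace_vec_span span_eq_iff by blast
  obtain y u where y: "y \<in> ?U" and u: "\<And>w. w \<in> ?U \<Longrightarrow> orthogonal u w" and vyu: "v = y + u"
    using orthogonal_subspace_decomp_exists[of ?U v] unfolding spU by metis
  define c where "c = (\<chi> i. cnj (u $ i))"
  have key: "lin_form c w = 0" if w: "w \<in> ?U" for w
  proof -
    have iw: "\<i> *s w \<in> ?U" using w vec.span_scale by blast
    have "inner u w = 0" "inner u (\<i> *s w) = 0" using u w iw by (auto simp: orthogonal_def)
    have e1: "Re (lin_form c w) = inner u w"
      by (auto simp: lin_form_def c_def inner_vec_def inner_complex_def Re_sum algebra_simps)
    have e2: "Im (lin_form c w) = - inner u (\<i> *s w)"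
      by (auto simp: lin_form_def c_def inner_vec_def inner_complex_def Im_sum algebra_simps sum_negf[symmetric])
    from e1 e2 \<open>inner u w = 0\<close> \<open>inner u (\<i> *s w) = 0\<close> have "Re (lin_form c w) = 0" "Im (lin_form c w) = 0" by auto
    then show ?thesis by (simp add: complex_eq_iff)
  qed
  have cw: "c \<in> perp W" using key by (auto simp: perp_def vec.span_base)
  have "u \<noteq> 0" using assms y vyu by auto
  then obtain i where "u $ i \<noteq> 0" by (auto simp: vec_eq_iff)
  have "Re (lin_form c u) = inner u u"
    by (simp add: lin_form_def c_def inner_vec_def inner_complex_def Re_sum algebra_simps)
  moreover have "inner u u > 0" using \<open>u \<noteq> 0\<close> by simp
  ultimately have "lin_form c u \<noteq> 0" by auto
  moreover have "lin_form c v = lin_form c u" using key[OF y] by (simp add: vyu lin_form_add2)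
  ultimately have "lin_form c v \<noteq> 0" by simp
  with cw show ?thesis by (intro bexI[of _ c])
qed

lemma double_perp: "{v. \<forall>c\<in>perp W. lin_form c v = 0} = vec.span (W::(complex^'m::finite) set)"
proof
  show "{v. \<forall>c\<in>perp W. lin_form c v = 0} \<subseteq> vec.span W"
    using separate by blast
  show "vec.span W \<subseteq> {v. \<forall>c\<in>perp W. lin_form c v = 0}"
    using perp_span by blast
qed

lemma perp_insert: "perp (insert b B) = perp B \<inter> {c. lin_form c b = 0}"
  by (auto simp: perp_def)

lemma dim_perp_indep:
  fixes B :: "(complex^'m::finite) set"
  assumes "finite B" "vec.independent B"
  shows "vec.dim (perp B) + card B = CARD('m)"
  using assms
proof (induction B rule: finite_induct)
  case empty
  have "perp ({}::(complex^'m) set) = UNIV" by (auto simp: perp_def)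
  then show ?case by (simp add: card_cart_basis)
next
  case (insert b B)
  have indB: "vec.independent B" and bnot: "b \<notin> vec.span B"
    using insert.prems insert.hyps(2) vec.independent_insert[of b B] by simp_all
  have IH: "vec.dim (perp B) + card B = CARD('m)" using insert.IH indB by blast
  obtain c0 where c0: "c0 \<in> perp B" "lin_form c0 b \<noteq> 0" using separate[OF bnot] by blast
  let ?P = "perp (insert b B)"
  have subP: "vec.subspace ?P" by (rule vec_subspace_perp)
  have c0P: "c0 \<notin> vec.span ?P"
  proof -
    have "vec.span ?P = ?P" using subP vec.span_eq_iff by blast
    moreover have "c0 \<notin> ?P" using c0(2) by (simp add: perp_def)
    ultimately show ?thesis by metis
  qed
  have "vec.span (insert c0 ?P) = perp B"
  proof (rule vec.span_subspace)
    show "insert c0 ?P \<subseteq> perp B" using c0 by (auto simp: perp_insert)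
    show "vec.subspace (perp B)" by (rule vec_subspace_perp)
    show "perp B \<subseteq> vec.span (insert c0 ?P)"
    proof
      fix c assume c: "c \<in> perp B"
      define \<alpha> where "\<alpha> = lin_form c b / lin_form c0 b"
      have l1: "lin_form (c - \<alpha> *s c0) b = 0"
        using c0(2) by (simp add: lin_form_diff1 lin_form_scale1 \<alpha>_def)
      have l2: "c - \<alpha> *s c0 \<in> perp B"
        using c c0(1) vec_subspace_perp[of B] vec.subspace_diff vec.subspace_scale by blast
      have "c - \<alpha> *s c0 \<in> ?P" using l1 l2 by (simp add: perp_insert)
      then have "c - \<alpha> *s c0 \<in> vec.span (insert c0 ?P)"
        by (meson insertCI vec.span_base)
      moreover have "\<alpha> *s c0 \<in> vec.span (insert c0 ?P)"
        by (meson insertI1 vec.span_base vec.span_scale)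
      ultimately have "(c - \<alpha> *s c0) + \<alpha> *s c0 \<in> vec.span (insert c0 ?P)"
        using vec.span_add by blast
      then show "c \<in> vec.span (insert c0 ?P)" by simp
    qed
  qed
  moreover have "vec.dim (insert c0 ?P) = vec.dim ?P + 1" using c0P by (simp add: vec.dim_insert)
  ultimately have "vec.dim (perp B) = vec.dim ?P + 1"
    using vec.dim_span[of "insert c0 ?P"] by simp
  then show ?case using IH insert.hyps by simp
qed

lemma dim_perp:
  fixes W :: "(complex^'m::finite) set"
  shows "vec.dim (perp W) + vec.dim W = CARD('m)"
proof -
  obtain B where B: "B \<subseteq> W" "vec.independent B" "W \<subseteq> vec.span B" "card B = vec.dim W"
    using vec.basis_exists by blast
  have "vec.span B = vec.span W"
  proof (rule vec.span_eq[THEN iffD2], rule conjI)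
    show "B \<subseteq> vec.span W" using B(1) vec.span_superset by (rule order_trans)
    show "W \<subseteq> vec.span B" by (rule B(3))
  qed
  then have "perp B = perp W" by (metis perp_span_eq)
  moreover have "finite B" using B(2) vec.finiteI_independent by blast
  ultimately show ?thesis using dim_perp_indep[of B] B by simp
qed



definition vecV :: "('m::finite \<Rightarrow> int^'n::finite) \<Rightarrow> complex \<Rightarrow> complex^'n \<Rightarrow> complex^'m" where
  "vecV r y0 y = (\<chi> i. y0 + (\<Sum>j\<in>UNIV. y $ j * of_int (r i $ j)))"

definition mon :: "('m::finite \<Rightarrow> int^'n::finite) \<Rightarrow> nat^'n \<Rightarrow> 'm \<Rightarrow> complex" where
  "mon r \<beta> i = of_int (\<Prod>j\<in>UNIV. (r i $ j) ^ (\<beta> $ j))"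

lemma Ak_rows_mon: "Ak_rows r k = {(\<chi> i. mon r \<beta> i) | \<beta>. (\<Sum>j\<in>UNIV. \<beta> $ j) \<le> k}"
  by (simp add: Ak_rows_def mon_def)

lemma vecV_add: "vecV r y0 y + t *s vecV r z0 z = vecV r (y0 + t * z0) (y + t *s z)"
  by (simp add: vecV_def vec_eq_iff algebra_simps sum.distrib sum_distrib_left)

lemma mon_add_axis: "mon r (\<beta> + axis j 1) i = mon r \<beta> i * of_int (r i $ j)"
proof -
  have "(\<Prod>l\<in>UNIV. (r i $ l) ^ ((\<beta> + axis j 1) $ l)) =
        (\<Prod>l\<in>UNIV. (r i $ l) ^ (\<beta> $ l) * (if l = j then r i $ l else 1))"
    by (rule prod.cong) (auto simp: axis_def)
  also have "\<dots> = (\<Prod>l\<in>UNIV. (r i $ l) ^ (\<beta> $ l)) * r i $ j"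
    by (simp add: prod.distrib)
  finally show ?thesis by (simp add: mon_def)
qed

lemma mon_add_axis': "mon r (\<beta> + axis j (Suc 0)) i = mon r \<beta> i * of_int (r i $ j)"
  using mon_add_axis by simp

lemma sum_add_axis: "(\<Sum>l\<in>UNIV. (\<beta> + axis j (1::nat)) $ l) = (\<Sum>l\<in>UNIV. \<beta> $ l) + 1"
  by (simp add: sum.distrib axis_def)

lemma vecV_nth: "vecV r y0 y $ i = y0 + (\<Sum>j\<in>UNIV. y $ j * of_int (r i $ j))"
  by (simp add: vecV_def)

lemma aux_distr: "(C::complex) * M * (y0 + (\<Sum>j\<in>A. y j * R j)) ^ Suc e =
   y0 * (C * M * (y0 + (\<Sum>j\<in>A. y j * R j)) ^ e) + (\<Sum>j\<in>A. y j * (C * (M * R j) * (y0 + (\<Sum>j\<in>A. y j * R j)) ^ e))"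
proof -
  let ?X = "(y0 + (\<Sum>j\<in>A. y j * R j)) ^ e"
  have "(\<Sum>j\<in>A. y j * (C * (M * R j) * ?X)) = (\<Sum>j\<in>A. (y j * R j) * (C * M * ?X))"
    by (rule sum.cong) (simp_all add: mult_ac)
  also have "\<dots> = (\<Sum>j\<in>A. y j * R j) * (C * M * ?X)"
    by (rule sum_distrib_right[symmetric])
  finally have "(\<Sum>j\<in>A. y j * (C * (M * R j) * ?X)) = (\<Sum>j\<in>A. y j * R j) * (C * M * ?X)" .
  then show ?thesis by (simp add: algebra_simps)
qed

lemma AL1:
  assumes c: "c \<in> perp (Ak_rows r k)"
  shows "(\<Sum>l\<in>UNIV. \<beta> $ l) + e \<le> k \<Longrightarrow>
     (\<Sum>i\<in>UNIV. c $ i * mon r \<beta> i * (vecV r y0 y $ i) ^ e) = 0"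
proof (induction e arbitrary: \<beta>)
  case 0
  have "(\<chi> i. mon r \<beta> i) \<in> Ak_rows r k" using 0 by (auto simp: Ak_rows_mon)
  then have "lin_form c (\<chi> i. mon r \<beta> i) = 0" using c by (auto simp: perp_def)
  then show ?case by (simp add: lin_form_def)
next
  case (Suc e)
  let ?w = "\<lambda>i. vecV r y0 y $ i"
  have "(\<Sum>i\<in>UNIV. c $ i * mon r \<beta> i * ?w i ^ Suc e) =
     (\<Sum>i\<in>UNIV. y0 * (c $ i * mon r \<beta> i * ?w i ^ e) +
        (\<Sum>j\<in>UNIV. y $ j * (c $ i * mon r (\<beta> + axis j 1) i * ?w i ^ e)))"
    by (rule sum.cong, simp, simp only: vecV_nth mon_add_axis aux_distr)
  also have "\<dots> = y0 * (\<Sum>i\<in>UNIV. c $ i * mon r \<beta> i * ?w i ^ e) +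
        (\<Sum>j\<in>UNIV. y $ j * (\<Sum>i\<in>UNIV. c $ i * mon r (\<beta> + axis j 1) i * ?w i ^ e))"
    by (simp add: sum.distrib sum_distrib_left[symmetric]) (subst sum.swap, simp add: sum_distrib_left)
  also have "\<dots> = 0"
  proof -
    have "(\<Sum>i\<in>UNIV. c $ i * mon r \<beta> i * ?w i ^ e) = 0" using Suc by simp
    moreover have "(\<Sum>i\<in>UNIV. c $ i * mon r (\<beta> + axis j 1) i * ?w i ^ e) = 0" for j
    proof -
      have "(\<Sum>l\<in>UNIV. (\<beta> + axis j 1) $ l) + e \<le> k" using Suc.prems by (simp only: sum_add_axis)
      from Suc.IH[OF this] show ?thesis .
    qed
    ultimately show ?thesis by simp
  qed
  finally show ?case .
qed

lemma coeff_lin_power: "coeff ([:a, b:] ^ Suc e) 1 = of_nat (Suc e) * a ^ e * (b::complex)"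
proof -
  have "coeff ([:a, b:] ^ Suc e) 1 = coeff (pderiv ([:a, b:] ^ Suc e)) 0"
    by (simp add: coeff_pderiv)
  also have "pderiv ([:a, b:] ^ Suc e) = smult (of_nat (Suc e)) ([:a, b:] ^ e) * [:b:]"
    by (simp only: pderiv_power_Suc) (simp add: pderiv_pCons)
  also have "coeff (smult (of_nat (Suc e)) ([:a, b:] ^ e) * [:b:]) 0 = of_nat (Suc e) * a ^ e * b"
    by (simp add: coeff_0_power)
  finally show ?thesis .
qed

lemma AL_list:
  fixes c :: "complex^'m::finite" and r :: "'m \<Rightarrow> int^'n::finite"
  assumes base: "\<And>y0 y e. e \<le> k \<Longrightarrow> (\<Sum>i\<in>UNIV. c $ i * (vecV r y0 y $ i) ^ e) = 0"
  shows "set xs \<subseteq> range (\<lambda>(z0, z). vecV r z0 z) \<Longrightarrow> e + length xs \<le> k \<Longrightarrow>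
     (\<Sum>i\<in>UNIV. c $ i * (vecV r y0 y $ i) ^ e * prod_list (map (\<lambda>v. v $ i) xs)) = 0"
proof (induction xs arbitrary: y0 y e)
  case Nil then show ?case using base by simp
next
  case (Cons x xs)
  obtain z0 z where x: "x = vecV r z0 z" using Cons.prems by auto
  let ?P = "\<lambda>i. prod_list (map (\<lambda>v. v $ i) xs)"
  let ?w = "\<lambda>i. vecV r y0 y $ i"
  define Q where "Q = (\<Sum>i\<in>UNIV. smult (c $ i * ?P i) ([:?w i, x $ i:] ^ Suc e))"
  have "poly Q t = 0" for t
  proof -
    have "poly Q t = (\<Sum>i\<in>UNIV. c $ i * (vecV r (y0 + t * z0) (y + t *s z) $ i) ^ Suc e * ?P i)"
      unfolding Q_def poly_sum
      by (rule sum.cong) (auto simp: x vecV_nth algebra_simps sum.distrib sum_distrib_left)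
    also have "\<dots> = 0" using Cons.IH[of "Suc e" "y0 + t * z0" "y + t *s z"] Cons.prems by simp
    finally show ?thesis .
  qed
  then have "Q = 0" using poly_all_0_iff_0 by blast
  then have "coeff Q 1 = 0" by simp
  then have "(\<Sum>i\<in>UNIV. c $ i * ?P i * (of_nat (Suc e) * ?w i ^ e * x $ i)) = 0"
    by (simp only: Q_def coeff_sum coeff_smult coeff_lin_power mult.assoc)
  then have "of_nat (Suc e) * (\<Sum>i\<in>UNIV. c $ i * ?w i ^ e * (x $ i * ?P i)) = 0"
    by (simp add: sum_distrib_left algebra_simps)
  moreover have "(of_nat (Suc e)::complex) \<noteq> 0" by (rule of_nat_neq_0)
  ultimately have "(\<Sum>i\<in>UNIV. c $ i * ?w i ^ e * (x $ i * ?P i)) = 0" by simp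
  then show ?case by simp
qed

lemma mon_list:
  "(\<Sum>l\<in>UNIV. \<beta> $ l) = N \<Longrightarrow> \<exists>xs. set xs \<subseteq> range (\<lambda>(z0, z). vecV r z0 z) \<and> length xs = N \<and>
     (\<forall>i. mon r \<beta> i = prod_list (map (\<lambda>v. v $ i) xs))"
proof (induction N arbitrary: \<beta>)
  case 0
  then have "\<beta> $ l = 0" for l by simp
  then show ?case by (auto simp: mon_def intro!: exI[of _ "[]"])
next
  case (Suc N)
  obtain j where j: "\<beta> $ j \<noteq> 0" using Suc.prems by (metis nat.distinct(1) sum.neutral)
  define \<beta>' where "\<beta>' = (\<chi> l. if l = j then \<beta> $ l - 1 else \<beta> $ l)"
  have b: "\<beta> = \<beta>' + axis j 1" using j by (auto simp: vec_eq_iff \<beta>'_def axis_def)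
  then have "(\<Sum>l\<in>UNIV. \<beta>' $ l) = N" using Suc.prems sum_add_axis[of \<beta>' j] by simp
  then obtain xs where xs: "set xs \<subseteq> range (\<lambda>(z0, z). vecV r z0 z)" "length xs = N"
     "\<forall>i. mon r \<beta>' i = prod_list (map (\<lambda>v. v $ i) xs)" using Suc.IH by blast
  have rj: "vecV r 0 (axis j 1) $ i = of_int (r i $ j)" for i
  proof -
    have "(\<Sum>l\<in>UNIV. axis j 1 $ l * (of_int (r i $ l)::complex)) = (\<Sum>l\<in>UNIV. if l = j then of_int (r i $ l) else 0)"
      by (rule sum.cong) (auto simp: axis_def)
    then show ?thesis by (simp add: vecV_nth)
  qed
  show ?case
    apply (rule exI[of _ "vecV r 0 (axis j 1) # xs"])
    using xs by (auto simp: b mon_add_axis mon_add_axis' rj mult.commute intro!: image_eqI[of _ _ "(0, axis j 1)"])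
qed

lemma AL2:
  fixes c :: "complex^'m::finite" and r :: "'m \<Rightarrow> int^'n::finite"
  assumes base: "\<And>y0 y e. e \<le> k \<Longrightarrow> (\<Sum>i\<in>UNIV. c $ i * (vecV r y0 y $ i) ^ e) = 0"
  shows "c \<in> perp (Ak_rows r k)"
proof -
  have "lin_form c (\<chi> i. mon r \<beta> i) = 0" if "(\<Sum>l\<in>UNIV. \<beta> $ l) \<le> k" for \<beta>
  proof -
    obtain xs where xs: "set xs \<subseteq> range (\<lambda>(z0, z). vecV r z0 z)" "length xs = (\<Sum>l\<in>UNIV. \<beta> $ l)"
     "\<forall>i. mon r \<beta> i = prod_list (map (\<lambda>v. v $ i) xs)" using mon_list by blast
    have "(\<Sum>i\<in>UNIV. c $ i * (vecV r 0 0 $ i) ^ 0 * prod_list (map (\<lambda>v. v $ i) xs)) = 0"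
      using AL_list[OF base xs(1), where e=0 and y0=0 and y=0] xs(2) that by simp
    then show ?thesis using xs(3) by (simp add: lin_form_def)
  qed
  then show ?thesis by (auto simp: perp_def Ak_rows_mon)
qed



lemma small_le:
  fixes x M \<epsilon> :: real
  assumes "\<epsilon> > 0" "\<And>t. 0 < t \<Longrightarrow> t < \<epsilon> \<Longrightarrow> x \<le> M * t"
  shows "x \<le> 0"
proof (rule ccontr)
  assume "\<not> x \<le> 0"
  then have x: "x > 0" by simp
  define t where "t = min (\<epsilon>/2) (x / (2 * (\<bar>M\<bar> + 1)))"
  have "t \<le> \<epsilon>/2" unfolding t_def by (rule min.cobounded1)
  moreover have "0 < t" using x assms(1) by (auto simp: t_def)
  ultimately have t: "0 < t" "t < \<epsilon>" using assms(1) by auto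
  have "M * t \<le> (\<bar>M\<bar> + 1) * t" using t by (intro mult_right_mono) auto
  also have "\<dots> \<le> (\<bar>M\<bar> + 1) * (x / (2 * (\<bar>M\<bar> + 1)))"
    by (intro mult_left_mono) (auto simp: t_def)
  also have "\<dots> = x / 2" by (simp add: field_simps)
  finally have "M * t \<le> x / 2" .
  with assms(2)[OF t] x show False by simp
qed

lemma poly_small:
  fixes a :: "nat \<Rightarrow> complex"
  assumes "\<eta> > 0"
    and "\<And>\<tau>. \<tau> \<noteq> 0 \<Longrightarrow> norm \<tau> < \<eta> \<Longrightarrow> norm (\<Sum>d\<le>k. a d * \<tau> ^ d) \<le> C * norm \<tau> ^ Suc k"
  shows "\<forall>d\<le>k. a d = 0"
  using assms
proof (induction k arbitrary: a C)
  case 0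
  have "norm (a 0) \<le> 0"
  proof (rule small_le[of "min \<eta> 1" _ "\<bar>C\<bar>"])
    show "min \<eta> 1 > 0" using 0 by simp
    fix t :: real assume t: "0 < t" "t < min \<eta> 1"
    have "norm (a 0) \<le> C * norm (of_real t :: complex) ^ 1"
      using 0(2)[of "of_real t"] t by simp
    then show "norm (a 0) \<le> \<bar>C\<bar> * t" using t by (simp add: abs_mult) (smt (verit) mult_right_mono)
  qed
  then show ?case by simp
next
  case (Suc k)
  define S where "S = (\<Sum>d<Suc k. norm (a (Suc d)))"
  have a0: "a 0 = 0"
  proof -
    have "norm (a 0) \<le> 0"
    proof (rule small_le[of "min \<eta> 1" _ "\<bar>C\<bar> + S"])
      show "min \<eta> 1 > 0" using Suc by simp
      fix t :: real assume t: "0 < t" "t < min \<eta> 1"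
      let ?\<tau> = "of_real t :: complex"
      have split: "(\<Sum>d\<le>Suc k. a d * ?\<tau> ^ d) = a 0 + (\<Sum>d<Suc k. a (Suc d) * ?\<tau> ^ Suc d)"
        by (subst sum.atMost_shift) simp
      have "norm (\<Sum>d<Suc k. a (Suc d) * ?\<tau> ^ Suc d) \<le> (\<Sum>d<Suc k. norm (a (Suc d)) * t)"
      proof (rule order_trans[OF norm_sum sum_mono])
        fix d assume "d \<in> {..<Suc k}"
        have "t ^ Suc d \<le> t" using t by (simp add: power_le_one mult_left_le_one_le)
        then show "norm (a (Suc d) * ?\<tau> ^ Suc d) \<le> norm (a (Suc d)) * t"
          using t by (simp add: norm_mult norm_power mult_left_mono)
      qed
      also have "\<dots> = S * t" unfolding S_def by (rule sum_distrib_right[symmetric])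
      finally have n1: "norm (\<Sum>d<Suc k. a (Suc d) * ?\<tau> ^ Suc d) \<le> S * t" .
      have "norm (\<Sum>d\<le>Suc k. a d * ?\<tau> ^ d) \<le> C * norm ?\<tau> ^ Suc (Suc k)"
        using Suc.prems(2)[of ?\<tau>] t by simp
      also have "\<dots> \<le> \<bar>C\<bar> * t"
      proof -
        have "t ^ Suc (Suc k) \<le> t" using t by (simp add: power_le_one mult_le_one)
        then have "C * t ^ Suc (Suc k) \<le> \<bar>C\<bar> * t"
          by (smt (verit) mult_left_mono mult_right_mono abs_ge_self t(1) zero_le_power)
        then show ?thesis using t by simp
      qed
      finally have n2: "norm (\<Sum>d\<le>Suc k. a d * ?\<tau> ^ d) \<le> \<bar>C\<bar> * t" .
      have "norm (a 0) \<le> norm (\<Sum>d\<le>Suc k. a d * ?\<tau> ^ d) + norm (\<Sum>d<Suc k. a (Suc d) * ?\<tau> ^ Suc d)"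
        unfolding split by (metis add_diff_cancel_right' norm_triangle_ineq4)
      then show "norm (a 0) \<le> (\<bar>C\<bar> + S) * t" using n1 n2 by (simp add: algebra_simps)
    qed
    then show ?thesis by simp
  qed
  have rest: "\<forall>d\<le>k. a (Suc d) = 0"
  proof (rule Suc.IH[of "\<lambda>d. a (Suc d)" C])
    show "\<eta> > 0" using Suc by simp
    fix \<tau> :: complex assume \<tau>: "\<tau> \<noteq> 0" "norm \<tau> < \<eta>"
    have "(\<Sum>d\<le>Suc k. a d * \<tau> ^ d) = \<tau> * (\<Sum>d\<le>k. a (Suc d) * \<tau> ^ d)"
      by (subst sum.atMost_Suc_shift) (simp add: a0 sum_distrib_left algebra_simps)
    then have "norm \<tau> * norm (\<Sum>d\<le>k. a (Suc d) * \<tau> ^ d) \<le> C * norm \<tau> ^ Suc (Suc k)"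
      using Suc.prems(2)[OF \<tau>] by (simp add: norm_mult)
    then have "norm \<tau> * norm (\<Sum>d\<le>k. a (Suc d) * \<tau> ^ d) \<le> norm \<tau> * (C * norm \<tau> ^ Suc k)"
      by (simp add: algebra_simps)
    then show "norm (\<Sum>d\<le>k. a (Suc d) * \<tau> ^ d) \<le> C * norm \<tau> ^ Suc k"
      using \<tau> by simp
  qed
  show ?case
  proof (intro allI impI)
    fix d assume "d \<le> Suc k"
    then show "a d = 0" using a0 rest by (cases d) auto
  qed
qed

lemma exp_taylor_bound:
  fixes z :: complex
  assumes "norm z \<le> 1"
  shows "norm (exp z - (\<Sum>d\<le>k. z ^ d / fact d)) \<le> exp 1 * norm z ^ Suc k"
proof -
  have "norm (exp z - (\<Sum>d\<le>k. z ^ d / fact d)) \<le> exp (norm z) * (norm z ^ Suc k) / fact k"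
    by (rule Taylor_exp_field)
  also have "\<dots> \<le> exp (norm z) * (norm z ^ Suc k)"
    using divide_left_mono[of 1 "fact k" "exp (norm z) * (norm z ^ Suc k)"] fact_ge_1[of k]
    by simp
  also have "\<dots> \<le> exp 1 * norm z ^ Suc k"
    using assms by (intro mult_right_mono) auto
  finally show ?thesis .
qed

lemma exp_small:
  fixes c w :: "'m::finite \<Rightarrow> complex"
  assumes "\<eta> > 0"
    and "\<And>\<tau>. \<tau> \<noteq> 0 \<Longrightarrow> norm \<tau> < \<eta> \<Longrightarrow> norm (\<Sum>i\<in>UNIV. c i * exp (\<tau> * w i)) \<le> C * norm \<tau> ^ Suc k"
  shows "\<forall>e\<le>k. (\<Sum>i\<in>UNIV. c i * w i ^ e) = 0"
proof -
  define W where "W = 1 + (\<Sum>i\<in>UNIV. norm (w i))"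
  have W2: "norm (w i) \<le> W" for i
  proof -
    have "norm (w i) \<le> (\<Sum>i\<in>UNIV. norm (w i))" by (rule member_le_sum) auto
    then show ?thesis by (simp add: W_def)
  qed
  have W: "W \<ge> 1" "\<And>i. norm (w i) \<le> W" using W2 by (auto simp: W_def sum_nonneg)
  define K where "K = (\<Sum>i\<in>UNIV. norm (c i)) * exp 1 * W ^ Suc k"
  define a where "a d = (\<Sum>i\<in>UNIV. c i * w i ^ d) / fact d" for d
  have "\<forall>d\<le>k. a d = 0"
  proof (rule poly_small[of "min \<eta> (1/W)" _ _ "C + K"])
    show "min \<eta> (1/W) > 0" using assms(1) W by simp
    fix \<tau> :: complex assume \<tau>: "\<tau> \<noteq> 0" "norm \<tau> < min \<eta> (1/W)"
    have pa: "(\<Sum>d\<le>k. a d * \<tau> ^ d) = (\<Sum>i\<in>UNIV. c i * (\<Sum>d\<le>k. (\<tau> * w i) ^ d / fact d))"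
    proof -
      have "a d * \<tau> ^ d = (\<Sum>i\<in>UNIV. c i * ((\<tau> * w i) ^ d / fact d))" for d
      proof -
        have "a d * \<tau> ^ d = (\<Sum>i\<in>UNIV. c i * w i ^ d / fact d * \<tau> ^ d)"
          unfolding a_def sum_divide_distrib sum_distrib_right ..
        also have "\<dots> = (\<Sum>i\<in>UNIV. c i * ((\<tau> * w i) ^ d / fact d))"
          by (rule sum.cong) (simp_all add: power_mult_distrib)
        finally show ?thesis .
      qed
      then have "(\<Sum>d\<le>k. a d * \<tau> ^ d) = (\<Sum>d\<le>k. \<Sum>i\<in>UNIV. c i * ((\<tau> * w i) ^ d / fact d))"
        by simp
      also have "\<dots> = (\<Sum>i\<in>UNIV. \<Sum>d\<le>k. c i * ((\<tau> * w i) ^ d / fact d))"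
        by (rule sum.swap)
      also have "\<dots> = (\<Sum>i\<in>UNIV. c i * (\<Sum>d\<le>k. (\<tau> * w i) ^ d / fact d))"
        by (simp add: sum_distrib_left)
      finally show ?thesis .
    qed
    have R: "norm (\<Sum>d\<le>k. a d * \<tau> ^ d) - norm (\<Sum>i\<in>UNIV. c i * exp (\<tau> * w i)) \<le> K * norm \<tau> ^ Suc k"
    proof -
      have "norm (\<Sum>d\<le>k. a d * \<tau> ^ d) - norm (\<Sum>i\<in>UNIV. c i * exp (\<tau> * w i)) \<le>
            norm ((\<Sum>i\<in>UNIV. c i * exp (\<tau> * w i)) - (\<Sum>d\<le>k. a d * \<tau> ^ d))"
        using norm_triangle_ineq2[of "\<Sum>d\<le>k. a d * \<tau> ^ d" "\<Sum>i\<in>UNIV. c i * exp (\<tau> * w i)"]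
        by (simp add: norm_minus_commute)
      also have "(\<Sum>i\<in>UNIV. c i * exp (\<tau> * w i)) - (\<Sum>d\<le>k. a d * \<tau> ^ d) =
          (\<Sum>i\<in>UNIV. c i * (exp (\<tau> * w i) - (\<Sum>d\<le>k. (\<tau> * w i) ^ d / fact d)))"
        by (simp only: pa right_diff_distrib sum_subtractf)
      also have "norm \<dots> \<le> (\<Sum>i\<in>UNIV. norm (c i) * (exp 1 * (W * norm \<tau>) ^ Suc k))"
      proof (rule order_trans[OF norm_sum sum_mono])
        fix i :: 'm
        have tw: "norm (\<tau> * w i) \<le> W * norm \<tau>"
          using W(2)[of i] by (metis mult.commute mult_left_mono norm_ge_zero norm_mult)
        have "W * norm \<tau> \<le> 1" using \<tau> W by (simp add: field_simps)
        then have "norm (\<tau> * w i) \<le> 1" using tw by simp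
        then have "norm (exp (\<tau> * w i) - (\<Sum>d\<le>k. (\<tau> * w i) ^ d / fact d)) \<le> exp 1 * norm (\<tau> * w i) ^ Suc k"
          by (rule exp_taylor_bound)
        also have "\<dots> \<le> exp 1 * (W * norm \<tau>) ^ Suc k"
          using tw by (intro mult_left_mono power_mono) auto
        finally show "norm (c i * (exp (\<tau> * w i) - (\<Sum>d\<le>k. (\<tau> * w i) ^ d / fact d))) \<le>
            norm (c i) * (exp 1 * (W * norm \<tau>) ^ Suc k)"
          by (simp add: norm_mult mult_left_mono)
      qed
      also have "\<dots> = (\<Sum>i\<in>UNIV. norm (c i)) * (exp 1 * (W * norm \<tau>) ^ Suc k)"
        by (rule sum_distrib_right[symmetric])
      also have "\<dots> = K * norm \<tau> ^ Suc k"
        unfolding K_def power_mult_distrib by (simp only: mult_ac)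
      finally show ?thesis .
    qed
    have "norm (\<Sum>i\<in>UNIV. c i * exp (\<tau> * w i)) \<le> C * norm \<tau> ^ Suc k"
      using assms(2) \<tau> by simp
    then show "norm (\<Sum>d\<le>k. a d * \<tau> ^ d) \<le> (C + K) * norm \<tau> ^ Suc k"
      using R by (simp add: distrib_right)
  qed
  then show ?thesis by (simp add: a_def)
qed



definition img :: "('m::finite \<Rightarrow> int^'n::finite) \<Rightarrow> (complex^'m) set" where
  "img r = {(\<chi> i. t * (\<Prod>j\<in>UNIV. (x $ j) powi (r i $ j))) | t x.
        t \<noteq> 0 \<and> (\<forall>j. x $ j \<noteq> 0)}"

lemma toric_cone_img: "toric_cone r = zariski_closure (img r)"
  by (simp add: toric_cone_def img_def)

lemma closure_vanish:
  "z \<in> zariski_closure S \<Longrightarrow> poly_fun f \<Longrightarrow> (\<And>s. s \<in> S \<Longrightarrow> f s = 0) \<Longrightarrow> f z = 0"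
  by (auto simp: zariski_closure_def)

lemma img_sub: "img r \<subseteq> toric_cone r"
  by (auto simp: toric_cone_img zariski_closure_def)

lemma pf_diff: "poly_fun f \<Longrightarrow> poly_fun g \<Longrightarrow> poly_fun (\<lambda>z. f z - g z)"
proof -
  assume f: "poly_fun f" and g: "poly_fun g"
  have "poly_fun (\<lambda>z. (-1) * g z)" using pf_mult[OF pf_const g] .
  from pf_add[OF f this] show ?thesis by simp
qed

lemma pf_power: "poly_fun f \<Longrightarrow> poly_fun (\<lambda>z. f z ^ n)"
proof (induction n)
  case 0 then show ?case using pf_const[of 1] by simp
next
  case (Suc n) then show ?case using pf_mult[OF Suc.prems Suc.IH[OF Suc.prems]] by simp
qed

lemma pf_prod: "finite A \<Longrightarrow> (\<And>a. a \<in> A \<Longrightarrow> poly_fun (f a)) \<Longrightarrow> poly_fun (\<lambda>z. \<Prod>a\<in>A. f a z)"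
proof (induction A rule: finite_induct)
  case empty then show ?case using pf_const[of 1] by simp
next
  case (insert a A) then show ?case using pf_mult[of "f a" "\<lambda>z. \<Prod>a\<in>A. f a z"] by simp
qed

lemma pf_mono: "poly_fun (\<lambda>z::complex^'m::finite. \<Prod>i\<in>UNIV. z $ i ^ a i)"
  by (rule pf_prod) (auto intro: pf_power pf_coord)

lemma pf_scale: "poly_fun f \<Longrightarrow> poly_fun (\<lambda>z. f (\<chi> i. e $ i * z $ i))"
proof (induction rule: poly_fun.induct)
  case (pf_const c) then show ?case by (rule poly_fun.pf_const)
next
  case (pf_coord i) then show ?case using pf_mult[OF poly_fun.pf_const poly_fun.pf_coord] by simp
next
  case (pf_add f g) then show ?case using poly_fun.pf_add by blast
next
  case (pf_mult f g) then show ?case using poly_fun.pf_mult by blast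
qed

lemma power_int_sum:
  fixes x :: complex
  assumes "x \<noteq> 0"
  shows "finite A \<Longrightarrow> x powi (\<Sum>a\<in>A. e a) = (\<Prod>a\<in>A. x powi e a)"
  by (induction A rule: finite_induct) (auto simp: power_int_add assms)

lemma img_monomial:
  fixes x :: "complex^'n::finite" and r :: "'m::finite \<Rightarrow> int^'n"
  assumes t: "t \<noteq> 0" and x: "\<forall>j. x $ j \<noteq> 0"
  shows "(\<Prod>i\<in>UNIV. (t * (\<Prod>j\<in>UNIV. x $ j powi (r i $ j))) ^ a i) =
     t ^ (\<Sum>i\<in>UNIV. a i) * (\<Prod>j\<in>UNIV. x $ j powi (\<Sum>i\<in>UNIV. r i $ j * int (a i)))"
proof -
  have "(\<Prod>i\<in>UNIV. (t * (\<Prod>j\<in>UNIV. x $ j powi (r i $ j))) ^ a i) =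
      (\<Prod>i\<in>UNIV. t ^ a i) * (\<Prod>i\<in>UNIV. \<Prod>j\<in>UNIV. x $ j powi (r i $ j * int (a i)))"
    by (simp add: power_mult_distrib prod.distrib prod_power_distrib power_int_power')
  also have "(\<Prod>i\<in>UNIV. t ^ a i) = t ^ (\<Sum>i\<in>UNIV. a i)" by (simp add: power_sum)
  also have "(\<Prod>i\<in>UNIV. \<Prod>j\<in>UNIV. x $ j powi (r i $ j * int (a i))) =
      (\<Prod>j\<in>UNIV. \<Prod>i\<in>UNIV. x $ j powi (r i $ j * int (a i)))"
    by (rule prod.swap)
  also have "\<dots> = (\<Prod>j\<in>UNIV. x $ j powi (\<Sum>i\<in>UNIV. r i $ j * int (a i)))"
    using x by (simp add: power_int_sum)
  finally show ?thesis .
qed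

lemma binomial_vanish:
  fixes r :: "'m::finite \<Rightarrow> int^'n::finite"
  assumes s: "(\<Sum>i\<in>UNIV. a i) = (\<Sum>i\<in>UNIV. b i)"
    and l: "\<And>j. (\<Sum>i\<in>UNIV. r i $ j * int (a i)) = (\<Sum>i\<in>UNIV. r i $ j * int (b i))"
    and z: "z \<in> toric_cone r"
  shows "(\<Prod>i\<in>UNIV. z $ i ^ a i) = (\<Prod>i\<in>UNIV. z $ i ^ b i)"
proof -
  have "(\<lambda>z. (\<Prod>i\<in>UNIV. z $ i ^ a i) - (\<Prod>i\<in>UNIV. z $ i ^ b i)) z = 0"
  proof (rule closure_vanish[OF z[unfolded toric_cone_img]])
    show "poly_fun (\<lambda>z. (\<Prod>i\<in>UNIV. z $ i ^ a i) - (\<Prod>i\<in>UNIV. z $ i ^ b i))"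
      by (intro pf_diff pf_mono)
    fix s assume "s \<in> img r"
    then obtain t x where t: "t \<noteq> 0" and x: "\<forall>j. x $ j \<noteq> 0"
      and s: "s = (\<chi> i. t * (\<Prod>j\<in>UNIV. (x $ j) powi (r i $ j)))" by (auto simp: img_def)
    show "(\<Prod>i\<in>UNIV. s $ i ^ a i) - (\<Prod>i\<in>UNIV. s $ i ^ b i) = 0"
      using img_monomial[OF t x, of r a] img_monomial[OF t x, of r b] s l assms(1) by simp
  qed
  then show ?thesis by simp
qed

lemma img_mult: "e \<in> img r \<Longrightarrow> s \<in> img r \<Longrightarrow> (\<chi> i. e $ i * s $ i) \<in> img r"
proof -
  assume "e \<in> img r" "s \<in> img r"
  then obtain t x t' x' where t: "t \<noteq> 0" "\<forall>j. x $ j \<noteq> 0" "t' \<noteq> 0" "\<forall>j. x' $ j \<noteq> 0"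
    and e: "e = (\<chi> i. t * (\<Prod>j\<in>UNIV. (x $ j) powi (r i $ j)))"
    and s: "s = (\<chi> i. t' * (\<Prod>j\<in>UNIV. (x' $ j) powi (r i $ j)))" by (auto simp: img_def)
  have "(\<chi> i. e $ i * s $ i) = (\<chi> i. (t * t') * (\<Prod>j\<in>UNIV. ((\<chi> j. x $ j * x' $ j) $ j) powi (r i $ j)))"
    by (simp add: e s vec_eq_iff power_int_mult_distrib prod.distrib mult_ac)
  moreover have "t * t' \<noteq> 0" using t by simp
  moreover have "\<forall>j. (\<chi> j. x $ j * x' $ j) $ j \<noteq> 0" using t by simp
  ultimately show ?thesis unfolding img_def by blast
qed

lemma cone_mult:
  assumes e: "e \<in> img r" and q: "q \<in> toric_cone r"
  shows "(\<chi> i. e $ i * q $ i) \<in> toric_cone r"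
  unfolding toric_cone_img zariski_closure_def
proof (intro CollectI allI impI)
  fix f :: "complex^'a \<Rightarrow> complex" assume f: "poly_fun f" and v: "\<forall>s\<in>img r. f s = 0"
  have "(\<lambda>z. f (\<chi> i. e $ i * z $ i)) q = 0"
  proof (rule closure_vanish[OF q[unfolded toric_cone_img]])
    show "poly_fun (\<lambda>z. f (\<chi> i. e $ i * z $ i))" using f by (rule pf_scale)
    fix s assume "s \<in> img r" then show "f (\<chi> i. e $ i * s $ i) = 0" using v img_mult[OF e] by blast
  qed
  then show "f (\<chi> i. e $ i * q $ i) = 0" by simp
qed

lemma exp_img:
  fixes r :: "'m::finite \<Rightarrow> int^'n::finite"
  shows "(\<chi> i. exp (\<tau> * vecV r y0 y $ i)) \<in> img r"
proof -
  have eqi: "exp (\<tau> * vecV r y0 y $ i) =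
       exp (\<tau> * y0) * (\<Prod>j\<in>UNIV. ((\<chi> j. exp (\<tau> * y $ j)) $ j) powi (r i $ j))" for i
  proof -
    have "(\<Prod>j\<in>UNIV. ((\<chi> j. exp (\<tau> * y $ j)) $ j) powi (r i $ j)) =
        (\<Prod>j\<in>UNIV. exp (\<tau> * (y $ j * of_int (r i $ j))))"
      by (rule prod.cong) (simp_all add: exp_power_int mult_ac)
    also have "\<dots> = exp (\<tau> * (\<Sum>j\<in>UNIV. y $ j * of_int (r i $ j)))"
      by (simp add: exp_sum[symmetric] sum_distrib_left)
    finally show ?thesis
      by (simp add: vecV_nth distrib_left exp_add)
  qed
  have "(\<chi> i. exp (\<tau> * vecV r y0 y $ i)) =
     (\<chi> i. exp (\<tau> * y0) * (\<Prod>j\<in>UNIV. ((\<chi> j. exp (\<tau> * y $ j)) $ j) powi (r i $ j)))"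
    by (simp only: eqi)
  moreover have "exp (\<tau> * y0) \<noteq> 0" "\<forall>j. (\<chi> j. exp (\<tau> * y $ j)) $ j \<noteq> 0" by simp_all
  ultimately show ?thesis unfolding img_def by blast
qed

lemma ones_img: "(\<chi> i. 1) \<in> img r"
  using exp_img[of 0 r 0 0] by simp



lemma D_identity:
  fixes g :: "'m::finite \<Rightarrow> 'a::comm_ring_1" and a0 :: "'m \<Rightarrow> int" and A :: "'n::finite \<Rightarrow> 'm \<Rightarrow> int"
    and c w :: "'n \<Rightarrow> int"
  shows "(\<Sum>i\<in>UNIV. of_int (N * (if i = i0 then 1 else 0) - a0 i - (\<Sum>j\<in>UNIV. c j * (N * A j i - w j * a0 i))) * g i)
     = of_int N * g i0 - (\<Sum>i\<in>UNIV. of_int (a0 i) * g i)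
       - (\<Sum>j\<in>UNIV. of_int (c j) * (of_int N * (\<Sum>i\<in>UNIV. of_int (A j i) * g i) - of_int (w j) * (\<Sum>i\<in>UNIV. of_int (a0 i) * g i)))"
proof -
  have "(\<Sum>i\<in>UNIV. of_int (N * (if i = i0 then 1 else 0) - a0 i - (\<Sum>j\<in>UNIV. c j * (N * A j i - w j * a0 i))) * g i)
     = (\<Sum>i\<in>UNIV. (if i = i0 then of_int N * g i else 0) - of_int (a0 i) * g i - (\<Sum>j\<in>UNIV. of_int (c j) * (of_int N * (of_int (A j i) * g i) - of_int (w j) * (of_int (a0 i) * g i))))"
  proof (rule sum.cong)
    fix i
    have e2: "(\<Sum>j\<in>UNIV. of_int (c j) * (of_int N * of_int (A j i) - of_int (w j) * of_int (a0 i))) * g i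
        = (\<Sum>j\<in>UNIV. of_int (c j) * (of_int N * (of_int (A j i) * g i) - of_int (w j) * (of_int (a0 i) * g i)))"
      unfolding sum_distrib_right by (rule sum.cong) (simp_all add: algebra_simps)
    have e1: "of_int (N * (if i = i0 then 1 else 0) - a0 i - (\<Sum>j\<in>UNIV. c j * (N * A j i - w j * a0 i))) * g i
       = of_int (N * (if i = i0 then 1 else 0)) * g i - of_int (a0 i) * g i -
         (\<Sum>j\<in>UNIV. of_int (c j) * (of_int N * of_int (A j i) - of_int (w j) * of_int (a0 i))) * g i"
      by (simp add: of_int_sum left_diff_distrib)
    show "of_int (N * (if i = i0 then 1 else 0) - a0 i - (\<Sum>j\<in>UNIV. c j * (N * A j i - w j * a0 i))) * g i =
        (if i = i0 then of_int N * g i else 0) - of_int (a0 i) * g i - (\<Sum>j\<in>UNIV. of_int (c j) * (of_int N * (of_int (A j i) * g i) - of_int (w j) * (of_int (a0 i) * g i)))"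
      unfolding e1 e2 by simp
  qed simp
  also have "\<dots> = of_int N * g i0 - (\<Sum>i\<in>UNIV. of_int (a0 i) * g i)
       - (\<Sum>i\<in>UNIV. \<Sum>j\<in>UNIV. of_int (c j) * (of_int N * (of_int (A j i) * g i) - of_int (w j) * (of_int (a0 i) * g i)))"
    by (simp add: sum_subtractf)
  also have "(\<Sum>i\<in>UNIV. \<Sum>j\<in>UNIV. of_int (c j) * (of_int N * (of_int (A j i) * g i) - of_int (w j) * (of_int (a0 i) * g i)))
     = (\<Sum>j\<in>UNIV. \<Sum>i\<in>UNIV. of_int (c j) * (of_int N * (of_int (A j i) * g i) - of_int (w j) * (of_int (a0 i) * g i)))"
    by (rule sum.swap)
  also have "\<dots> = (\<Sum>j\<in>UNIV. of_int (c j) * (of_int N * (\<Sum>i\<in>UNIV. of_int (A j i) * g i) - of_int (w j) * (\<Sum>i\<in>UNIV. of_int (a0 i) * g i)))"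
    by (simp add: sum_distrib_left sum_subtractf right_diff_distrib)
  finally show ?thesis .
qed

lemma sum_smult_component: "(\<Sum>i\<in>UNIV. a i *s (v i :: int^'n)) $ l = (\<Sum>i\<in>UNIV. a i * v i $ l)"
  by (simp add: sum_component)

lemma exists_a0:
  fixes r :: "'m::finite \<Rightarrow> int^'n::finite"
  assumes g: "good_config r"
    and A: "\<And>j l. (\<Sum>i\<in>UNIV. A j i * r i $ l) = (if l = j then 1 else 0)"
  shows "\<exists>a0. (\<forall>l. (\<Sum>i\<in>UNIV. a0 i * r i $ l) = 0) \<and> (\<Sum>i\<in>UNIV. a0 i) \<noteq> 0"
proof (rule ccontr)
  assume "\<not> ?thesis"
  then have H: "\<And>a. (\<forall>l. (\<Sum>i\<in>UNIV. a i * r i $ l) = 0) \<Longrightarrow> (\<Sum>i\<in>UNIV. a i) = 0" by blast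
  define w where "w j = (\<Sum>i\<in>UNIV. A j i)" for j
  have one: "(\<Sum>j\<in>UNIV. r i0 $ j * w j) = 1" for i0
  proof -
    define b where "b i = (if i = i0 then 1 else 0) - (\<Sum>j\<in>UNIV. r i0 $ j * A j i)" for i
    have "(\<Sum>i\<in>UNIV. b i * r i $ l) = 0" for l
    proof -
      have "(\<Sum>i\<in>UNIV. b i * r i $ l) = (\<Sum>i\<in>UNIV. (if i = i0 then r i $ l else 0) - (\<Sum>j\<in>UNIV. r i0 $ j * (A j i * r i $ l)))"
        by (rule sum.cong) (simp_all add: b_def left_diff_distrib right_diff_distrib sum_distrib_right sum_distrib_left mult_ac)
      also have "\<dots> = r i0 $ l - (\<Sum>i\<in>UNIV. \<Sum>j\<in>UNIV. r i0 $ j * (A j i * r i $ l))"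
        by (simp add: sum_subtractf)
      also have "(\<Sum>i\<in>UNIV. \<Sum>j\<in>UNIV. r i0 $ j * (A j i * r i $ l)) = (\<Sum>j\<in>UNIV. \<Sum>i\<in>UNIV. r i0 $ j * (A j i * r i $ l))"
        by (rule sum.swap)
      also have "\<dots> = (\<Sum>j\<in>UNIV. r i0 $ j * (if l = j then 1 else 0))"
        by (simp add: sum_distrib_left[symmetric] A)
      also have "\<dots> = r i0 $ l" by (simp add: if_distrib cong: if_cong)
      finally show ?thesis by simp
    qed
    then have "(\<Sum>i\<in>UNIV. b i) = 0" using H by blast
    moreover have "(\<Sum>i\<in>UNIV. b i) = 1 - (\<Sum>i\<in>UNIV. \<Sum>j\<in>UNIV. r i0 $ j * A j i)"
      by (simp add: b_def sum_subtractf)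
    moreover have "(\<Sum>i\<in>UNIV. \<Sum>j\<in>UNIV. r i0 $ j * A j i) = (\<Sum>j\<in>UNIV. r i0 $ j * w j)"
      by (subst sum.swap) (simp add: w_def sum_distrib_left)
    ultimately show ?thesis by simp
  qed
  define Wv :: "real^'n" where "Wv = (\<chi> j. real_of_int (w j))"
  define R where "R i = ((\<chi> j. real_of_int (r i $ j)) :: real^'n)" for i
  have "Wv \<bullet> R i = 1" for i
  proof -
    have "Wv \<bullet> R i = real_of_int (\<Sum>j\<in>UNIV. r i $ j * w j)"
      by (simp add: Wv_def R_def inner_vec_def mult.commute)
    then show ?thesis using one[of i] by simp
  qed
  then have sub: "range R \<subseteq> {x. Wv \<bullet> x = 1}" by auto
  have "Wv \<noteq> 0"
  proof
    assume "Wv = 0"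
    then have "w j = 0" for j by (simp add: Wv_def vec_eq_iff)
    then show False using one[of undefined] by simp
  qed
  then have "aff_dim (range R) \<le> int CARD('n) - 1"
    using aff_dim_subset[OF sub] by simp
  moreover have "aff_dim (range R) = int CARD('n)" using g by (simp add: good_config_def R_def)
  ultimately show False by simp
qed

lemma kernel_vectors:
  fixes r :: "'m::finite \<Rightarrow> int^'n::finite"
  assumes g: "good_config r"
  obtains D :: "'m \<Rightarrow> 'm \<Rightarrow> int" where
    "\<And>i0. (\<Sum>i\<in>UNIV. D i0 i) = 0" "\<And>i0 l. (\<Sum>i\<in>UNIV. r i $ l * D i0 i) = 0"
    "\<And>lv :: 'm \<Rightarrow> complex. (\<And>i0. (\<Sum>i\<in>UNIV. of_int (D i0 i) * lv i) = 0) \<Longrightarrow>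
        \<exists>y0 y. \<forall>i. lv i = vecV r y0 y $ i"
proof -
  have "\<forall>j. \<exists>a::'m \<Rightarrow> int. axis j 1 = (\<Sum>i\<in>UNIV. a i *s r i)"
    using g by (auto simp: good_config_def)
  then obtain A :: "'n \<Rightarrow> 'm \<Rightarrow> int" where A0: "\<And>j. axis j 1 = (\<Sum>i\<in>UNIV. A j i *s r i)" by metis
  have A: "(\<Sum>i\<in>UNIV. A j i * r i $ l) = (if l = j then 1 else 0)" for j l
    using arg_cong[OF A0[of j], of "\<lambda>v. v $ l"] by (simp add: sum_smult_component axis_def)
  obtain a0 where a0: "\<And>l. (\<Sum>i\<in>UNIV. a0 i * r i $ l) = 0" "(\<Sum>i\<in>UNIV. a0 i) \<noteq> 0"
    using exists_a0[OF g A] by blast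
  define N where "N = (\<Sum>i\<in>UNIV. a0 i)"
  define w where "w j = (\<Sum>i\<in>UNIV. A j i)" for j
  define D where "D i0 i = N * (if i = i0 then 1 else 0) - a0 i - (\<Sum>j\<in>UNIV. r i0 $ j * (N * A j i - w j * a0 i))" for i0 i
  have N0: "N \<noteq> 0" using a0 N_def by simp
  have Did: "(\<Sum>i\<in>UNIV. of_int (D i0 i) * g i)
     = of_int N * g i0 - (\<Sum>i\<in>UNIV. of_int (a0 i) * g i)
       - (\<Sum>j\<in>UNIV. of_int (r i0 $ j) * (of_int N * (\<Sum>i\<in>UNIV. of_int (A j i) * g i) - of_int (w j) * (\<Sum>i\<in>UNIV. of_int (a0 i) * g i)))"
    for i0 and g :: "'m \<Rightarrow> 'a::comm_ring_1"
    unfolding D_def by (rule D_identity)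
  show ?thesis
  proof
    fix i0
    show "(\<Sum>i\<in>UNIV. D i0 i) = 0"
      using Did[of i0 "\<lambda>_. 1::int"] by (simp add: N_def w_def mult.commute)
  next
    fix i0 l
    have s1: "(\<Sum>i\<in>UNIV. a0 i * r i $ l) = 0" by (rule a0(1))
    have s2: "(\<Sum>i\<in>UNIV. A j i * r i $ l) = (if l = j then 1 else 0)" for j by (rule A)
    have "(\<Sum>i\<in>UNIV. D i0 i * r i $ l) = N * r i0 $ l - (\<Sum>j\<in>UNIV. r i0 $ j * (N * (if l = j then 1 else 0)))"
      using Did[of i0 "\<lambda>i. r i $ l"] by (simp add: s1 s2 mult.commute)
    also have "\<dots> = 0" by (simp add: if_distrib cong: if_cong)
    finally show "(\<Sum>i\<in>UNIV. r i $ l * D i0 i) = 0" by (simp add: mult.commute)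
  next
    fix lv :: "'m \<Rightarrow> complex"
    assume l0: "\<And>i0. (\<Sum>i\<in>UNIV. of_int (D i0 i) * lv i) = 0"
    define y0 where "y0 = (\<Sum>i\<in>UNIV. of_int (a0 i) * lv i) / of_int N"
    define y where "y = (\<chi> j. (\<Sum>i\<in>UNIV. of_int (A j i) * lv i) - of_int (w j) * y0)"
    have "lv i0 = vecV r y0 y $ i0" for i0
    proof -
      have S0: "(\<Sum>i\<in>UNIV. of_int (a0 i) * lv i) = of_int N * y0" using N0 by (simp add: y0_def)
      have Sj: "(\<Sum>i\<in>UNIV. of_int (A j i) * lv i) = y $ j + of_int (w j) * y0" for j
        by (simp add: y_def)
      have "0 = of_int N * lv i0 - of_int N * y0 -
          (\<Sum>j\<in>UNIV. of_int (r i0 $ j) * (of_int N * (y $ j + of_int (w j) * y0) - of_int (w j) * (of_int N * y0)))"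
        using Did[of i0 lv] l0[of i0] by (simp add: S0 Sj)
      also have "(\<Sum>j\<in>UNIV. of_int (r i0 $ j) * (of_int N * (y $ j + of_int (w j) * y0) - of_int (w j) * (of_int N * y0)))
          = of_int N * (\<Sum>j\<in>UNIV. y $ j * of_int (r i0 $ j))"
        by (simp add: sum_distrib_left algebra_simps)
      finally have "of_int N * (lv i0 - y0 - (\<Sum>j\<in>UNIV. y $ j * of_int (r i0 $ j))) = 0"
        by (simp add: algebra_simps)
      then have "lv i0 - y0 - (\<Sum>j\<in>UNIV. y $ j * of_int (r i0 $ j)) = 0" using N0 by simp
      then show ?thesis by (simp add: vecV_nth algebra_simps)
    qed
    then show "\<exists>y0 y. \<forall>i. lv i = vecV r y0 y $ i" by blast
  qed
qed



lemma norm_le_sum_cart: "norm (x::complex^'m::finite) \<le> (\<Sum>i\<in>UNIV. norm (x $ i))"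
  by (simp add: norm_vec_def L2_set_le_sum)

lemma lin_form_D: "lin_form c (\<chi> i. q $ i * v $ i) = lin_form (\<chi> i. c $ i * q $ i) v"
  by (simp add: lin_form_def mult_ac)

lemma exp_sub1_bound: "norm u \<le> 1 \<Longrightarrow> norm (exp u - 1) \<le> exp 1 * norm (u::complex)"
  using exp_taylor_bound[of u 0] by simp

lemma ker_sub:
  fixes r :: "'m::finite \<Rightarrow> int^'n::finite"
  assumes q: "q \<in> toric_cone r" "\<forall>i. q $ i \<noteq> 0" and c: "c \<in> jet_kernel (toric_cone r) k q"
  shows "(\<chi> i. c $ i * q $ i) \<in> perp (Ak_rows r k)"
proof (rule AL2)
  fix y0 y e assume e: "e \<le> k"
  obtain C \<delta> where \<delta>: "\<delta> > 0" and Cb: "\<And>z. z \<in> toric_cone r \<Longrightarrow> norm (z - q) < \<delta> \<Longrightarrow>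
      cmod (lin_form c z) \<le> C * norm (z - q) ^ (k + 1)"
    using c by (auto simp: jet_kernel_def)
  define w where "w i = vecV r y0 y $ i" for i
  define W where "W = 1 + (\<Sum>i\<in>UNIV. norm (w i))"
  have W2: "norm (w i) \<le> W" for i
  proof -
    have "norm (w i) \<le> (\<Sum>i\<in>UNIV. norm (w i))" by (rule member_le_sum) auto
    then show ?thesis by (simp add: W_def)
  qed
  have W1: "W \<ge> 1" by (simp add: W_def sum_nonneg)
  define L where "L = (\<Sum>i\<in>UNIV. norm (q $ i)) * exp 1 * W"
  have L0: "L \<ge> 0" using W1 by (simp add: L_def sum_nonneg)
  have "\<forall>e\<le>k. (\<Sum>i\<in>UNIV. (c $ i * q $ i) * w i ^ e) = 0"
  proof (rule exp_small[of "min (1/W) (\<delta>/(L+1))" _ _ "\<bar>C\<bar> * L ^ Suc k"])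
    show "min (1/W) (\<delta>/(L+1)) > 0" using W1 \<delta> L0 by simp
    fix \<tau> :: complex assume \<tau>: "\<tau> \<noteq> 0" "norm \<tau> < min (1/W) (\<delta>/(L+1))"
    define z where "z = (\<chi> i. (\<chi> i. exp (\<tau> * vecV r y0 y $ i)) $ i * q $ i)"
    have zX: "z \<in> toric_cone r" unfolding z_def by (rule cone_mult[OF exp_img q(1)])
    have tw: "norm (\<tau> * w i) \<le> W * norm \<tau>" for i
      using W2[of i] by (metis mult.commute mult_left_mono norm_ge_zero norm_mult)
    have tW: "W * norm \<tau> \<le> 1" using \<tau> W1 by (simp add: field_simps)
    have dist: "norm (z - q) \<le> L * norm \<tau>"
    proof -
      have "norm (z - q) \<le> (\<Sum>i\<in>UNIV. norm ((z - q) $ i))" by (rule norm_le_sum_cart)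
      also have "\<dots> \<le> (\<Sum>i\<in>UNIV. norm (q $ i) * (exp 1 * (W * norm \<tau>)))"
      proof (rule sum_mono)
        fix i
        have "(z - q) $ i = q $ i * (exp (\<tau> * w i) - 1)" by (simp add: z_def w_def algebra_simps)
        moreover have "norm (exp (\<tau> * w i) - 1) \<le> exp 1 * (W * norm \<tau>)"
          using exp_sub1_bound[of "\<tau> * w i"] tw[of i] tW by (smt (verit) exp_gt_zero mult_left_mono)
        ultimately show "norm ((z - q) $ i) \<le> norm (q $ i) * (exp 1 * (W * norm \<tau>))"
          by (simp add: norm_mult mult_left_mono)
      qed
      also have "\<dots> = (\<Sum>i\<in>UNIV. norm (q $ i)) * (exp 1 * (W * norm \<tau>))"
        by (rule sum_distrib_right[symmetric])
      also have "\<dots> = L * norm \<tau>" by (simp add: L_def mult_ac)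
      finally show ?thesis .
    qed
    have "L * norm \<tau> < \<delta>"
    proof -
      have "L * norm \<tau> \<le> (L + 1) * norm \<tau>" by (simp add: mult_right_mono)
      also have "\<dots> < (L + 1) * (\<delta> / (L + 1))" using \<tau> L0 by (intro mult_strict_left_mono) auto
      also have "\<dots> = \<delta>" using L0 by simp
      finally show ?thesis .
    qed
    then have zd: "norm (z - q) < \<delta>" using dist by simp
    have "lin_form c z = (\<Sum>i\<in>UNIV. (c $ i * q $ i) * exp (\<tau> * w i))"
      by (simp add: lin_form_def z_def w_def mult_ac)
    then have "norm (\<Sum>i\<in>UNIV. (c $ i * q $ i) * exp (\<tau> * w i)) \<le> C * norm (z - q) ^ (k + 1)"
      using Cb[OF zX zd] by simp
    also have "\<dots> \<le> \<bar>C\<bar> * (L * norm \<tau>) ^ Suc k"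
    proof -
      have "C * norm (z - q) ^ (k + 1) \<le> \<bar>C\<bar> * norm (z - q) ^ (k + 1)" by (simp add: mult_right_mono)
      also have "\<dots> \<le> \<bar>C\<bar> * (L * norm \<tau>) ^ Suc k"
      proof -
        have "norm (z - q) ^ Suc k \<le> (L * norm \<tau>) ^ Suc k" using power_mono[OF dist norm_ge_zero] .
        then show ?thesis by (simp add: mult_left_mono)
      qed
      finally show ?thesis .
    qed
    also have "\<dots> = \<bar>C\<bar> * L ^ Suc k * norm \<tau> ^ Suc k" by (simp add: power_mult_distrib)
    finally show "norm (\<Sum>i\<in>UNIV. (c $ i * q $ i) * exp (\<tau> * w i)) \<le> \<bar>C\<bar> * L ^ Suc k * norm \<tau> ^ Suc k" .
  qed
  then show "(\<Sum>i\<in>UNIV. (\<chi> i. c $ i * q $ i) $ i * vecV r y0 y $ i ^ e) = 0" using e by (simp add: w_def)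
qed



lemma Ln_bound:
  fixes u :: complex
  assumes "norm u \<le> 1/2"
  shows "norm (ln (1 + u)) \<le> 2 * norm u"
proof -
  have "norm (ln (1 + u) - u) \<le> norm u ^ 2 / (1 - norm u)"
    using assms by (intro Ln_approx_linear) simp
  also have "\<dots> \<le> norm u"
  proof -
    have "norm u ^ 2 \<le> norm u * (1 - norm u)"
      using assms by (simp add: power2_eq_square mult_left_mono)
    then show ?thesis using assms by (simp add: divide_le_eq)
  qed
  finally have "norm (ln (1 + u) - u) \<le> norm u" .
  then show ?thesis using norm_triangle_ineq2[of "ln (1 + u)" u] by simp
qed

lemma nat_parts: "int (nat x) - int (nat (- x)) = x"
  by simp

lemma ker_sup:
  fixes r :: "'m::finite \<Rightarrow> int^'n::finite"
  assumes g: "good_config r" and q: "q \<in> toric_cone r" "\<forall>i. q $ i \<noteq> 0"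
    and c: "(\<chi> i. c $ i * q $ i) \<in> perp (Ak_rows r k)"
  shows "c \<in> jet_kernel (toric_cone r) k q"
proof -
  define c' where "c' i = c $ i * q $ i" for i
  have orth: "(\<Sum>i\<in>UNIV. c' i * (vecV r y0 y $ i) ^ e) = 0" if "e \<le> k" for y0 y e
    using AL1[OF c, of 0 e y0 y] that by (simp add: mon_def c'_def)
  obtain D :: "'m \<Rightarrow> 'm \<Rightarrow> int" where D1: "\<And>i0. (\<Sum>i\<in>UNIV. D i0 i) = 0"
    and D2: "\<And>i0 l. (\<Sum>i\<in>UNIV. r i $ l * D i0 i) = 0"
    and D3: "\<And>lv :: 'm \<Rightarrow> complex. (\<And>i0. (\<Sum>i\<in>UNIV. of_int (D i0 i) * lv i) = 0) \<Longrightarrow>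
        \<exists>y0 y. \<forall>i. lv i = vecV r y0 y $ i"
    using kernel_vectors[OF g] by blast
  define \<rho> where "\<rho> = Min (range (\<lambda>i. norm (q $ i)))"
  have \<rho>le: "\<rho> \<le> norm (q $ i)" for i unfolding \<rho>_def by (rule Min_le) auto
  have \<rho>0: "\<rho> > 0" unfolding \<rho>_def using q(2) by (subst Min_gr_iff) auto
  define M where "M = 1 + (\<Sum>i0\<in>UNIV. \<Sum>i\<in>UNIV. \<bar>real_of_int (D i0 i)\<bar>)"
  have M1: "M \<ge> 1" by (simp add: M_def sum_nonneg)
  have MD: "(\<Sum>i\<in>UNIV. \<bar>real_of_int (D i0 i)\<bar>) \<le> M" for i0
  proof -
    have "(\<Sum>i\<in>UNIV. \<bar>real_of_int (D i0 i)\<bar>) \<le> (\<Sum>i0\<in>UNIV. \<Sum>i\<in>UNIV. \<bar>real_of_int (D i0 i)\<bar>)"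
      by (rule member_le_sum[of i0 UNIV "\<lambda>i0. \<Sum>i\<in>UNIV. \<bar>real_of_int (D i0 i)\<bar>"]) (auto intro: sum_nonneg)
    then show ?thesis by (simp add: M_def)
  qed
  define \<delta> where "\<delta> = \<rho> / (2 * M)"
  have \<delta>0: "\<delta> > 0" using \<rho>0 M1 by (simp add: \<delta>_def)
  have \<delta>\<rho>: "\<delta> / \<rho> = 1 / (2 * M)" using \<rho>0 M1 by (simp add: \<delta>_def)
  define C where "C = (\<Sum>i\<in>UNIV. norm (c' i)) * exp 1 * (2 / \<rho>) ^ Suc k"
  show ?thesis unfolding jet_kernel_def
  proof (rule CollectI, rule exI[of _ C], rule exI[of _ \<delta>], intro conjI ballI impI)
    show "\<delta> > 0" by (rule \<delta>0)
    fix z assume zX: "z \<in> toric_cone r" and zd: "norm (z - q) < \<delta>"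
    define u where "u i = z $ i / q $ i - 1" for i
    have ub: "norm (u i) \<le> norm (z - q) / \<rho>" for i
    proof -
      have "u i = (z - q) $ i / q $ i" using q(2) by (simp add: u_def field_simps)
      then have "norm (u i) = norm ((z - q) $ i) / norm (q $ i)" by (simp add: norm_divide)
      also have "\<dots> \<le> norm (z - q) / norm (q $ i)"
      proof (rule divide_right_mono)
        show "norm ((z - q) $ i) \<le> norm (z - q)" by (rule Finite_Cartesian_Product.norm_nth_le)
      qed simp
      also have "\<dots> \<le> norm (z - q) / \<rho>"
      proof -
        have "norm (q $ i) > 0" using \<rho>le[of i] \<rho>0 by linarith
        then show ?thesis using \<rho>le[of i] \<rho>0 by (intro divide_left_mono) auto
      qed
      finally show ?thesis .
    qed
    have zq\<rho>: "norm (z - q) / \<rho> \<le> 1 / (2 * M)"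
    proof -
      have "norm (z - q) / \<rho> \<le> \<delta> / \<rho>" using zd \<rho>0 by (intro divide_right_mono) auto
      then show ?thesis using \<delta>\<rho> by simp
    qed
    have half: "1 / (2 * M) \<le> 1/2" using M1 by (simp add: field_simps)
    have u2: "norm (u i) \<le> 1/2" for i using ub[of i] zq\<rho> half by linarith
    define lv where "lv i = ln (1 + u i)" for i
    have lvb: "norm (lv i) \<le> 2 * (norm (z - q) / \<rho>)" for i
      using Ln_bound[OF u2[of i]] ub[of i] unfolding lv_def by linarith
    have lv1: "norm (lv i) \<le> 1" for i using lvb[of i] zq\<rho> half by linarith
    have u0: "1 + u i \<noteq> 0" for i
    proof
      assume "1 + u i = 0" then have "u i = -1" by (simp add: add_eq_0_iff)
      with u2[of i] show False by simp
    qed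
    have zi: "z $ i = q $ i * exp (lv i)" for i
      using u0[of i] q(2) by (simp add: lv_def u_def)
    have "\<exists>y0 y. \<forall>i. lv i = vecV r y0 y $ i"
    proof (rule D3)
      fix i0
      define a where "a i = nat (D i0 i)" for i
      define b where "b i = nat (- D i0 i)" for i
      have ab: "int (a i) - int (b i) = D i0 i" for i by (simp add: a_def b_def)
      have sab: "(\<Sum>i\<in>UNIV. a i) = (\<Sum>i\<in>UNIV. b i)"
      proof -
        have "(\<Sum>i\<in>UNIV. int (a i)) - (\<Sum>i\<in>UNIV. int (b i)) = (\<Sum>i\<in>UNIV. D i0 i)"
          by (simp add: sum_subtractf[symmetric] ab)
        then have "int (\<Sum>i\<in>UNIV. a i) = int (\<Sum>i\<in>UNIV. b i)" using D1[of i0] by (simp add: of_nat_sum)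
        then show ?thesis by (simp only: of_nat_eq_iff)
      qed
      have lab: "(\<Sum>i\<in>UNIV. r i $ l * int (a i)) = (\<Sum>i\<in>UNIV. r i $ l * int (b i))" for l
      proof -
        have "(\<Sum>i\<in>UNIV. r i $ l * int (a i)) - (\<Sum>i\<in>UNIV. r i $ l * int (b i)) = (\<Sum>i\<in>UNIV. r i $ l * D i0 i)"
          by (simp add: sum_subtractf[symmetric] right_diff_distrib[symmetric] ab)
        then show ?thesis using D2 by simp
      qed
      have zb: "(\<Prod>i\<in>UNIV. z $ i ^ a i) = (\<Prod>i\<in>UNIV. z $ i ^ b i)" by (rule binomial_vanish[OF sab lab zX])
      have qb: "(\<Prod>i\<in>UNIV. q $ i ^ a i) = (\<Prod>i\<in>UNIV. q $ i ^ b i)" by (rule binomial_vanish[OF sab lab q(1)])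
      have ex: "exp (\<Sum>i\<in>UNIV. of_nat (f i) * lv i) = (\<Prod>i\<in>UNIV. z $ i ^ f i) / (\<Prod>i\<in>UNIV. q $ i ^ f i)" for f
      proof -
        have "exp (\<Sum>i\<in>UNIV. of_nat (f i) * lv i) = (\<Prod>i\<in>UNIV. exp (lv i) ^ f i)"
          by (simp add: exp_sum exp_of_nat_mult)
        also have "\<dots> = (\<Prod>i\<in>UNIV. (z $ i / q $ i) ^ f i)"
          using q(2) by (intro prod.cong refl) (simp add: zi)
        also have "\<dots> = (\<Prod>i\<in>UNIV. z $ i ^ f i) / (\<Prod>i\<in>UNIV. q $ i ^ f i)"
          by (simp add: power_divide prod_dividef)
        finally show ?thesis .
      qed
      have "exp (\<Sum>i\<in>UNIV. of_nat (a i) * lv i) = exp (\<Sum>i\<in>UNIV. of_nat (b i) * lv i)"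
        using ex[of a] ex[of b] zb qb by simp
      then obtain n :: int where n: "(\<Sum>i\<in>UNIV. of_nat (a i) * lv i) = (\<Sum>i\<in>UNIV. of_nat (b i) * lv i) + of_int (2 * n) * pi * \<i>"
        unfolding exp_eq by blast
      have DS: "(\<Sum>i\<in>UNIV. of_int (D i0 i) * lv i) = (\<Sum>i\<in>UNIV. of_nat (a i) * lv i) - (\<Sum>i\<in>UNIV. of_nat (b i) * lv i)"
      proof -
        have "of_int (D i0 i) * lv i = of_nat (a i) * lv i - of_nat (b i) * lv i" for i
        proof -
          have "(of_int (D i0 i) :: complex) = of_int (int (a i) - int (b i))" by (simp add: ab)
          then show ?thesis by (simp add: left_diff_distrib)
        qed
        then show ?thesis by (simp add: sum_subtractf)
      qed
      have nb: "norm (\<Sum>i\<in>UNIV. of_int (D i0 i) * lv i) \<le> 1"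
      proof -
        have "norm (\<Sum>i\<in>UNIV. of_int (D i0 i) * lv i) \<le> (\<Sum>i\<in>UNIV. \<bar>real_of_int (D i0 i)\<bar> * (2 * (norm (z - q) / \<rho>)))"
        proof (rule order_trans[OF norm_sum sum_mono])
          fix i
          show "norm (of_int (D i0 i) * lv i) \<le> \<bar>real_of_int (D i0 i)\<bar> * (2 * (norm (z - q) / \<rho>))"
            unfolding norm_mult norm_of_int by (rule mult_left_mono[OF lvb[of i] abs_ge_zero])
        qed
        also have "\<dots> = (\<Sum>i\<in>UNIV. \<bar>real_of_int (D i0 i)\<bar>) * (2 * (norm (z - q) / \<rho>))"
          by (rule sum_distrib_right[symmetric])
        also have "\<dots> \<le> M * (2 * (1 / (2 * M)))"
          using MD[of i0] zq\<rho> M1 \<rho>0 by (intro mult_mono) (auto simp: sum_nonneg)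
        also have "\<dots> = 1" using M1 by simp
        finally show ?thesis .
      qed
      have "n = 0"
      proof (rule ccontr)
        assume "n \<noteq> 0"
        then have "\<bar>real_of_int n\<bar> \<ge> 1" by linarith
        have "norm (of_int (2 * n) * pi * \<i>) = 2 * pi * \<bar>real_of_int n\<bar>"
          by (simp add: norm_mult)
        also have "\<dots> \<ge> 2 * pi" using \<open>\<bar>real_of_int n\<bar> \<ge> 1\<close> by simp
        finally have "norm (of_int (2 * n) * pi * \<i>) \<ge> 2 * pi" .
        moreover have "norm (of_int (2 * n) * pi * \<i>) \<le> 1" using nb DS n by simp
        ultimately show False using pi_gt3 by linarith
      qed
      then show "(\<Sum>i\<in>UNIV. of_int (D i0 i) * lv i) = 0" using DS n by simp
    qed
    then obtain y0 y where lvv: "\<And>i. lv i = vecV r y0 y $ i" by blast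
    have "lin_form c z = (\<Sum>i\<in>UNIV. c' i * exp (lv i))"
      by (simp add: lin_form_def zi c'_def mult_ac)
    also have "\<dots> = (\<Sum>i\<in>UNIV. c' i * (exp (lv i) - (\<Sum>d\<le>k. lv i ^ d / fact d)))"
    proof -
      have "(\<Sum>i\<in>UNIV. c' i * (\<Sum>d\<le>k. lv i ^ d / fact d)) = (\<Sum>d\<le>k. (\<Sum>i\<in>UNIV. c' i * lv i ^ d) / fact d)"
      proof -
        have "(\<Sum>i\<in>UNIV. c' i * (\<Sum>d\<le>k. lv i ^ d / fact d)) = (\<Sum>i\<in>UNIV. \<Sum>d\<le>k. c' i * lv i ^ d / fact d)"
          by (simp add: sum_distrib_left)
        also have "\<dots> = (\<Sum>d\<le>k. \<Sum>i\<in>UNIV. c' i * lv i ^ d / fact d)"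
          by (rule sum.swap)
        also have "\<dots> = (\<Sum>d\<le>k. (\<Sum>i\<in>UNIV. c' i * lv i ^ d) / fact d)"
          by (simp add: sum_divide_distrib)
        finally show ?thesis .
      qed
      also have "\<dots> = 0" using orth by (simp add: lvv)
      finally show ?thesis by (simp add: right_diff_distrib sum_subtractf)
    qed
    finally have lf: "lin_form c z = (\<Sum>i\<in>UNIV. c' i * (exp (lv i) - (\<Sum>d\<le>k. lv i ^ d / fact d)))" .
    have "cmod (lin_form c z) \<le> (\<Sum>i\<in>UNIV. norm (c' i) * (exp 1 * (2 / \<rho> * norm (z - q)) ^ Suc k))"
      unfolding lf
    proof (rule order_trans[OF norm_sum sum_mono])
      fix i
      have "norm (exp (lv i) - (\<Sum>d\<le>k. lv i ^ d / fact d)) \<le> exp 1 * norm (lv i) ^ Suc k"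
        by (rule exp_taylor_bound[OF lv1])
      also have "\<dots> \<le> exp 1 * (2 / \<rho> * norm (z - q)) ^ Suc k"
        using lvb[of i] by (intro mult_left_mono power_mono) auto
      finally have X: "norm (exp (lv i) - (\<Sum>d\<le>k. lv i ^ d / fact d)) \<le> exp 1 * (2 / \<rho> * norm (z - q)) ^ Suc k" .
      show "norm (c' i * (exp (lv i) - (\<Sum>d\<le>k. lv i ^ d / fact d))) \<le>
          norm (c' i) * (exp 1 * (2 / \<rho> * norm (z - q)) ^ Suc k)"
        unfolding norm_mult by (rule mult_left_mono[OF X norm_ge_zero])
    qed
    also have "\<dots> = (\<Sum>i\<in>UNIV. norm (c' i)) * (exp 1 * (2 / \<rho> * norm (z - q)) ^ Suc k)"
      by (rule sum_distrib_right[symmetric])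
    also have "\<dots> = C * norm (z - q) ^ (k + 1)"
      unfolding C_def power_mult_distrib by simp
    finally show "cmod (lin_form c z) \<le> C * norm (z - q) ^ (k + 1)" .
  qed
qed



lemma Dq_linear: "Vector_Spaces.linear (*s) (*s) (\<lambda>v::complex^'m::finite. \<chi> i. q $ i * v $ i)"
  by unfold_locales (simp_all add: vec_eq_iff algebra_simps)

lemma ker_eq:
  fixes r :: "'m::finite \<Rightarrow> int^'n::finite"
  assumes g: "good_config r" and q: "q \<in> toric_cone r" "\<forall>i. q $ i \<noteq> 0"
  shows "jet_kernel (toric_cone r) k q = perp ((\<lambda>v. \<chi> i. q $ i * v $ i) ` Ak_rows r k)"
proof
  show "jet_kernel (toric_cone r) k q \<subseteq> perp ((\<lambda>v. \<chi> i. q $ i * v $ i) ` Ak_rows r k)"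
  proof
    fix c assume "c \<in> jet_kernel (toric_cone r) k q"
    then have "(\<chi> i. c $ i * q $ i) \<in> perp (Ak_rows r k)" using ker_sub q by blast
    then show "c \<in> perp ((\<lambda>v. \<chi> i. q $ i * v $ i) ` Ak_rows r k)"
      by (auto simp: perp_def lin_form_D)
  qed
  show "perp ((\<lambda>v. \<chi> i. q $ i * v $ i) ` Ak_rows r k) \<subseteq> jet_kernel (toric_cone r) k q"
  proof
    fix c assume "c \<in> perp ((\<lambda>v. \<chi> i. q $ i * v $ i) ` Ak_rows r k)"
    then have "(\<chi> i. c $ i * q $ i) \<in> perp (Ak_rows r k)"
      by (auto simp: perp_def lin_form_D)
    then show "c \<in> jet_kernel (toric_cone r) k q" using ker_sup g q by blast
  qed
qed

lemma jet_rank_eq: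
  fixes r :: "'m::finite \<Rightarrow> int^'n::finite"
  assumes g: "good_config r" and q: "q \<in> toric_cone r" "\<forall>i. q $ i \<noteq> 0"
  shows "jet_rank (toric_cone r) k q = vec.dim (Ak_rows r k)"
proof -
  let ?f = "\<lambda>v::complex^'m. \<chi> i. q $ i * v $ i"
  have "vec.dim (?f ` Ak_rows r k) = vec.dim (Ak_rows r k)"
  proof (rule vec.dim_image_eq[OF Dq_linear])
    show "inj_on ?f (vec.span (Ak_rows r k))"
      using q(2) by (auto simp: inj_on_def vec_eq_iff)
  qed
  moreover have "vec.dim (perp (?f ` Ak_rows r k)) + vec.dim (?f ` Ak_rows r k) = CARD('m)"
    by (rule dim_perp)
  ultimately show ?thesis
    unfolding jet_rank_def ker_eq[OF g q] by simp
qed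

lemma ones_cone: "(\<chi> i. 1) \<in> toric_cone r"
  using img_sub ones_img by blast

lemma osc_ones:
  fixes r :: "'m::finite \<Rightarrow> int^'n::finite"
  assumes g: "good_config r"
  shows "osculating_space (toric_cone r) k (\<chi> i. 1) = vec.span (Ak_rows r k)"
proof -
  have "(\<lambda>v::complex^'m. \<chi> i. (\<chi> i. 1) $ i * v $ i) ` Ak_rows r k = Ak_rows r k"
    by simp
  then have "jet_kernel (toric_cone r) k (\<chi> i. 1) = perp (Ak_rows r k)"
    using ker_eq[OF g ones_cone, of k] by simp
  then show ?thesis unfolding osculating_space_def using double_perp by simp
qed

lemma img_nonzero: "s \<in> img r \<Longrightarrow> s $ i \<noteq> 0"
  by (auto simp: img_def)

theorem lemma5p1:
  fixes r :: "'m::finite \<Rightarrow> int^'n::finite" and k :: nat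
  assumes "good_config r" and "k \<ge> 1"
  shows "vec.span (Ak_rows r k) = osculating_space (toric_cone r) k (\<chi> i. 1)
    \<and> (\<forall>r' :: 'm \<Rightarrow> int^'n2::finite. good_config r' \<and> toric_cone r' = toric_cone r \<longrightarrow>
          vec.span (Ak_rows r' k) = vec.span (Ak_rows r k))
    \<and> (generically_jet_spanned (toric_cone r) CARD('n) k \<longleftrightarrow>
          vec.dim (Ak_rows r k) = (CARD('n) + k) choose k)"
proof (intro conjI allI impI)
  show "vec.span (Ak_rows r k) = osculating_space (toric_cone r) k (\<chi> i. 1)"
    using osc_ones[OF assms(1)] by simp
next
  fix r' :: "'m \<Rightarrow> int^'n2::finite"
  assume h: "good_config r' \<and> toric_cone r' = toric_cone r"
  then show "vec.span (Ak_rows r' k) = vec.span (Ak_rows r k)"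
    using osc_ones[OF assms(1)] osc_ones[of r' k] by simp
next
  have bin: "(CARD('n) + k) choose CARD('n) = (CARD('n) + k) choose k"
    using binomial_symmetric[of "CARD('n)" "CARD('n) + k"] by simp
  show "generically_jet_spanned (toric_cone r) CARD('n) k \<longleftrightarrow>
          vec.dim (Ak_rows r k) = (CARD('n) + k) choose k"
  proof
    assume "generically_jet_spanned (toric_cone r) CARD('n) k"
    then obtain f p0 where f: "poly_fun f" and p0: "p0 \<in> toric_cone r" "f p0 \<noteq> 0"
      and H: "\<And>p. p \<in> toric_cone r \<Longrightarrow> p \<noteq> 0 \<Longrightarrow> f p \<noteq> 0 \<Longrightarrow> jet_rank (toric_cone r) k p = (CARD('n) + k) choose CARD('n)"
      unfolding generically_jet_spanned_def by blast
    have "\<exists>s\<in>img r. f s \<noteq> 0"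
    proof (rule ccontr)
      assume "\<not> ?thesis"
      then have "f p0 = 0" using closure_vanish[OF p0(1)[unfolded toric_cone_img] f] by blast
      with p0 show False by simp
    qed
    then obtain s where s: "s \<in> img r" "f s \<noteq> 0" by blast
    have sX: "s \<in> toric_cone r" using s img_sub by blast
    have snz: "\<forall>i. s $ i \<noteq> 0" using s img_nonzero by blast
    then have "s \<noteq> 0" by (metis zero_index)
    then have "jet_rank (toric_cone r) k s = (CARD('n) + k) choose CARD('n)" using H sX s by blast
    then show "vec.dim (Ak_rows r k) = (CARD('n) + k) choose k"
      using jet_rank_eq[OF assms(1) sX snz] bin by simp
  next
    assume d: "vec.dim (Ak_rows r k) = (CARD('n) + k) choose k"
    show "generically_jet_spanned (toric_cone r) CARD('n) k"
      unfolding generically_jet_spanned_def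
    proof (intro exI[of _ "\<lambda>z. \<Prod>i\<in>UNIV. z $ i"] conjI ballI impI)
      show "poly_fun (\<lambda>z::complex^'m. \<Prod>i\<in>UNIV. z $ i)"
        by (rule pf_prod) (auto intro: pf_coord)
      show "\<exists>p\<in>toric_cone r. (\<Prod>i\<in>UNIV. p $ i) \<noteq> 0"
        using ones_cone by force
      fix p assume p: "p \<in> toric_cone r" and "p \<noteq> 0 \<and> (\<Prod>i\<in>UNIV. p $ i) \<noteq> 0"
      then have "\<forall>i. p $ i \<noteq> 0" by auto
      then show "jet_rank (toric_cone r) k p = (CARD('n) + k) choose CARD('n)"
        using jet_rank_eq[OF assms(1) p] d bin by simp
    qed
  qed
qed

end
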